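(* Let $\mathcal M(\mathcal P,<)$ be a Morse decomposition of an isolated invariant set $S$, let $\{N(I): I\subset\mathcal P\text{ an attracting interval}\}$ be a Morse set filtration for $\mathcal M(\mathcal P,<)$, and let $J\subset I$ be attracting intervals. Then $(N(I),N(J))$ is a filtration pair for $M_{I\setminus J}$.
   Context: Let $X$ be a locally compact metric space, $U\subset X$ open and $f:U\to X$ continuous. A solution through $x$ is a map $\sigma:\mathbb Z\to U$ with $\sigma(0)=x$ and $f(\sigma(n))=\sigma(n+1)$ for all $n$; for $N\subset U$, $\operatorname{Inv} N$ is the set of $x\in N$ admitting a solution through $x$ with all values in $N$. A compact $N\subset U$ is an isolating neighborhood if $\operatorname{Inv} N\subset\operatorname{Int} N$; $S$ is an isolated invariant set if $S=\operatorname{Inv} N$ for some isolating neighborhood $N$. The exit set of $N$ is $N^-=\{x\in N:f(x)\notin\operatorname{Int} N\}$. A filtration pair for an isolated invariant set $S$ is a pair of compact sets $L\subset N$ contained in the interior of the domain of $f$, each the closure of its interior, such that (1) $\operatorname{cl}(N\setminus L)$ is an isolating neighborhood with $\operatorname{Inv}\operatorname{cl}(N\setminus L)=S$; (2) $L$ is a neighborhood of $N^-$ in $N$; (3) $f(L)\cap\operatorname{cl}(N\setminus L)=\emptyset$. $\omega(x)=\bigcap_{K>0}\operatorname{cl}\big(\bigcup_{n>K}\{f^n(x)\}\big)$, $\omega(\sigma)=\omega(\sigma(0))$, $\alpha(\sigma)=\bigcap_{K>0}\operatorname{cl}\big(\bigcup_{n>K}\{\sigma(-n)\}\big)$. For $B,C\subset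 S$, $C(B,C;S)$ is the set of $x\in S\setminus(B\cup C)$ for which there is a solution $\sigma:\mathbb Z\to S$ through $x$ with $\alpha(\sigma)\subset B$ and $\omega(x)\subset C$. Let $\mathcal P$ be a finite set with a partial order $<$ (irreflexive, transitive). $I\subset\mathcal P$ is an interval if $p<r<q$, $p,q\in I$ imply $r\in I$, and an attracting interval if $r<q$, $q\in I$ imply $r\in I$. A collection $\{M_p\subset S:p\in\mathcal P\}$ of pairwise disjoint isolated invariant sets is a Morse decomposition of $S$ if for every $x\in S$ and every solution $\sigma:\mathbb Z\to S$ through $x$, either $\sigma(\mathbb Z)\subset M_p$ for some $p$, or $\omega(\sigma)\subset M_p$ and $\alpha(\sigma)\subset M_q$ for some $p<q$. For an interval $I$, $M_I=\bigcup_{p\in I}M_p\cup\bigcup_{q,r\in I}C(M_q,M_r;S)$. A Morse set filtration for $\mathcal M(\mathcal P,<)$ is a collection of compact sets $\{N(I)\subset X: I\text{ an attracting interval}\}$ such that for all attracting intervals $I,J$: (1) $(N(I),N(\emptyset))$ is a filtration pair for $M_I$; (2) $N(I)\cap N(J)=N(I\cap J)$; (3) $N(I)\cup N(J)=N(I\cup J)$. *)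

theory Defs
  imports "HOL-Analysis.Analysis"
begin

text \<open>Ambient space X is the whole type 'a (a metric space); the map f is
  considered on its domain U only.\<close>

definition is_solution :: "'a set \<Rightarrow> ('a \<Rightarrow> 'a) \<Rightarrow> (int \<Rightarrow> 'a) \<Rightarrow> 'a \<Rightarrow> bool" where
  "is_solution U f \<sigma> x \<longleftrightarrow> \<sigma> 0 = x \<and> (\<forall>n. \<sigma> n \<in> U \<and> f (\<sigma> n) = \<sigma> (n + 1))"

definition Inv :: "'a set \<Rightarrow> ('a \<Rightarrow> 'a) \<Rightarrow> 'a set \<Rightarrow> 'a set" where
  "Inv U f N = {x \<in> N. \<exists>\<sigma>. is_solution U f \<sigma> x \<and> range \<sigma> \<subseteq> N}"

definition isolating_nbhd :: "'a::metric_space set \<Rightarrow> ('a \<Rightarrow> 'a) \<Rightarrow> 'a set \<Rightarrow> bool" where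
  "isolating_nbhd U f N \<longleftrightarrow> compact N \<and> N \<subseteq> U \<and> Inv U f N \<subseteq> interior N"

definition isolated_invariant :: "'a::metric_space set \<Rightarrow> ('a \<Rightarrow> 'a) \<Rightarrow> 'a set \<Rightarrow> bool" where
  "isolated_invariant U f S \<longleftrightarrow> (\<exists>N. isolating_nbhd U f N \<and> S = Inv U f N)"

definition exit_set :: "('a \<Rightarrow> 'a) \<Rightarrow> 'a::metric_space set \<Rightarrow> 'a set" where
  "exit_set f N = {x \<in> N. f x \<notin> interior N}"

definition filtration_pair ::
  "'a::metric_space set \<Rightarrow> ('a \<Rightarrow> 'a) \<Rightarrow> 'a set \<Rightarrow> 'a set \<Rightarrow> 'a set \<Rightarrow> bool" where
  "filtration_pair U f S N L \<longleftrightarrow>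
     compact N \<and> compact L \<and> L \<subseteq> N \<and> N \<subseteq> interior U \<and>
     closure (interior L) = L \<and> closure (interior N) = N \<and>
     isolating_nbhd U f (closure (N - L)) \<and> Inv U f (closure (N - L)) = S \<and>
     (\<exists>V. open V \<and> exit_set f N \<subseteq> V \<and> V \<inter> N \<subseteq> L) \<and>
     f ` L \<inter> closure (N - L) = {}"

definition omega_limit :: "('a \<Rightarrow> 'a) \<Rightarrow> 'a::metric_space \<Rightarrow> 'a set" where
  "omega_limit f x = (\<Inter>K\<in>{0<..}. closure {(f ^^ n) x | n::nat. n > K})"

definition alpha_limit :: "(int \<Rightarrow> 'a::metric_space) \<Rightarrow> 'a set" where
  "alpha_limit \<sigma> = (\<Inter>K\<in>{0<..}. closure {\<sigma> (- int n) | n::nat. n > K})"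

definition connecting :: "'a::metric_space set \<Rightarrow> ('a \<Rightarrow> 'a) \<Rightarrow> 'a set \<Rightarrow> 'a set \<Rightarrow> 'a set \<Rightarrow> 'a set" where
  "connecting U f B C S = {x \<in> S - (B \<union> C). \<exists>\<sigma>. is_solution U f \<sigma> x \<and> range \<sigma> \<subseteq> S
       \<and> alpha_limit \<sigma> \<subseteq> B \<and> omega_limit f x \<subseteq> C}"

definition strict_partial_order_on :: "'p set \<Rightarrow> ('p \<Rightarrow> 'p \<Rightarrow> bool) \<Rightarrow> bool" where
  "strict_partial_order_on P lt \<longleftrightarrow> finite P \<and> (\<forall>p\<in>P. \<not> lt p p) \<and>
     (\<forall>p\<in>P. \<forall>q\<in>P. \<forall>r\<in>P. lt p q \<longrightarrow> lt q r \<longrightarrow> lt p r)"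

definition is_interval :: "'p set \<Rightarrow> ('p \<Rightarrow> 'p \<Rightarrow> bool) \<Rightarrow> 'p set \<Rightarrow> bool" where
  "is_interval P lt I \<longleftrightarrow> I \<subseteq> P \<and>
     (\<forall>p\<in>I. \<forall>q\<in>I. \<forall>r\<in>P. lt p r \<longrightarrow> lt r q \<longrightarrow> r \<in> I)"

definition attracting_interval :: "'p set \<Rightarrow> ('p \<Rightarrow> 'p \<Rightarrow> bool) \<Rightarrow> 'p set \<Rightarrow> bool" where
  "attracting_interval P lt I \<longleftrightarrow> I \<subseteq> P \<and> (\<forall>q\<in>I. \<forall>r\<in>P. lt r q \<longrightarrow> r \<in> I)"

definition morse_decomposition ::
  "'a::metric_space set \<Rightarrow> ('a \<Rightarrow> 'a) \<Rightarrow> 'a set \<Rightarrow> 'p set \<Rightarrow> ('p \<Rightarrow> 'p \<Rightarrow> bool) \<Rightarrow> ('p \<Rightarrow> 'a set) \<Rightarrow> bool" where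
  "morse_decomposition U f S P lt M \<longleftrightarrow>
     strict_partial_order_on P lt \<and>
     (\<forall>p\<in>P. M p \<subseteq> S \<and> isolated_invariant U f (M p)) \<and>
     (\<forall>p\<in>P. \<forall>q\<in>P. p \<noteq> q \<longrightarrow> M p \<inter> M q = {}) \<and>
     (\<forall>x\<in>S. \<forall>\<sigma>. is_solution U f \<sigma> x \<and> range \<sigma> \<subseteq> S \<longrightarrow>
        (\<exists>p\<in>P. range \<sigma> \<subseteq> M p) \<or>
        (\<exists>p\<in>P. \<exists>q\<in>P. lt p q \<and> omega_limit f (\<sigma> 0) \<subseteq> M p \<and> alpha_limit \<sigma> \<subseteq> M q))"

definition morse_set ::
  "'a::metric_space set \<Rightarrow> ('a \<Rightarrow> 'a) \<Rightarrow> 'a set \<Rightarrow> ('p \<Rightarrow> 'a set) \<Rightarrow> 'p set \<Rightarrow> 'a set" where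
  "morse_set U f S M I = (\<Union>p\<in>I. M p) \<union> (\<Union>q\<in>I. \<Union>r\<in>I. connecting U f (M q) (M r) S)"

definition morse_set_filtration ::
  "'a::metric_space set \<Rightarrow> ('a \<Rightarrow> 'a) \<Rightarrow> 'a set \<Rightarrow> 'p set \<Rightarrow> ('p \<Rightarrow> 'p \<Rightarrow> bool) \<Rightarrow> ('p \<Rightarrow> 'a set)
     \<Rightarrow> ('p set \<Rightarrow> 'a set) \<Rightarrow> bool" where
  "morse_set_filtration U f S P lt M N \<longleftrightarrow>
     (\<forall>I J. attracting_interval P lt I \<longrightarrow> attracting_interval P lt J \<longrightarrow>
        compact (N I) \<and>
        filtration_pair U f (morse_set U f S M I) (N I) (N {}) \<and>
        N I \<inter> N J = N (I \<inter> J) \<and> N I \<union> N J = N (I \<union> J))"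

end

theory Submission
  imports Defs
begin


definition lim_set :: "(nat \<Rightarrow> 'a::metric_space) \<Rightarrow> 'a set" where
  "lim_set s = (\<Inter>K\<in>{0<..}. closure {s n | n::nat. n > K})"

lemma lim_set_iff: "z \<in> lim_set s \<longleftrightarrow> (\<forall>K. \<forall>e>0. \<exists>n>K. dist (s n) z < e)"
proof
  assume z: "z \<in> lim_set s"
  show "\<forall>K. \<forall>e>0. \<exists>n>K. dist (s n) z < e"
  proof (intro allI impI)
    fix K :: nat and e :: real assume e: "e > 0"
    have "z \<in> closure {s n | n::nat. n > Suc K}" using z unfolding lim_set_def by auto
    then obtain y where "y \<in> {s n | n::nat. n > Suc K}" "dist y z < e"
      using e unfolding closure_approachable by blast
    then show "\<exists>n>K. dist (s n) z < e" using Suc_lessD by blast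
  qed
next
  assume H: "\<forall>K. \<forall>e>0. \<exists>n>K. dist (s n) z < e"
  show "z \<in> lim_set s" unfolding lim_set_def
  proof (rule InterI)
    fix X assume "X \<in> (\<lambda>K. closure {s n | n::nat. n > K}) ` {0<..}"
    then obtain K where X: "X = closure {s n | n::nat. n > K}" by auto
    show "z \<in> X" unfolding X closure_approachable using H by blast
  qed
qed

lemma omega_eq: "omega_limit f x = lim_set (\<lambda>n. (f^^n) x)"
  by (simp add: omega_limit_def lim_set_def)

lemma alpha_eq: "alpha_limit \<sigma> = lim_set (\<lambda>n. \<sigma> (- int n))"
  by (simp add: alpha_limit_def lim_set_def)

lemma lim_set_shift: "lim_set (\<lambda>n. s (n + m)) = lim_set s"
proof (rule set_eqI, unfold lim_set_iff, intro iffI allI impI)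
  fix z K and e :: real
  assume H: "\<forall>K. \<forall>e>0. \<exists>n>K. dist (s (n + m)) z < e" and e: "e > 0"
  then obtain n where "n > K" "dist (s (n + m)) z < e" by blast
  then show "\<exists>n>K. dist (s n) z < e" by (intro exI[of _ "n+m"]) auto
next
  fix z K and e :: real
  assume H: "\<forall>K. \<forall>e>0. \<exists>n>K. dist (s n) z < e" and e: "e > 0"
  then obtain n where "n > K + m" "dist (s n) z < e" by blast
  then show "\<exists>n>K. dist (s (n + m)) z < e" by (intro exI[of _ "n-m"]) auto
qed

lemma lim_set_closed_subset:
  assumes "range s \<subseteq> D" "closed D" shows "lim_set s \<subseteq> D"
proof
  fix z assume "z \<in> lim_set s"
  then have "\<forall>e>0. \<exists>n. dist (s n) z < e" unfolding lim_set_iff by blast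
  then have "z \<in> closure (range s)" unfolding closure_approachable by blast
  then show "z \<in> D" using assms closure_minimal by blast
qed

lemma lim_set_nonempty:
  fixes s :: "nat \<Rightarrow> 'a::metric_space"
  assumes "compact C" "range s \<subseteq> C" shows "lim_set s \<noteq> {}"
proof -
  obtain l r where l: "l \<in> C" "strict_mono r" "(s \<circ> r) \<longlonglongrightarrow> l"
    using seq_compactE[OF compact_imp_seq_compact[OF assms(1)], of s] assms(2) by blast
  have "l \<in> lim_set s" unfolding lim_set_iff
  proof (intro allI impI)
    fix K and e :: real assume e: "e > 0"
    obtain N where N: "\<forall>k\<ge>N. dist ((s \<circ> r) k) l < e"
      using l(3) e unfolding lim_sequentially by blast
    define k where "k = max N (Suc K)"
    have "r k \<ge> k" using seq_suble[OF l(2)] by blast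
    moreover have "k \<ge> N" "k \<ge> Suc K" unfolding k_def by auto
    ultimately show "\<exists>n>K. dist (s n) l < e" using N
      by (intro exI[of _ "r k"]) auto
  qed
  then show ?thesis by blast
qed

lemma lim_set_image:
  assumes U: "open U" "continuous_on U f" and C: "compact C" "C \<subseteq> U" "range s \<subseteq> C"
    and ab: "\<forall>n. f (s (a n)) = s (b n)" "\<forall>m>0. \<exists>n. a n = m" "\<forall>n. a n \<le> b n + 1"
    and z: "z \<in> lim_set s"
  shows "f z \<in> lim_set s"
proof -
  have zU: "z \<in> U" using lim_set_closed_subset[of s C] C compact_imp_closed z by blast
  then have cz: "isCont f z" using U continuous_on_eq_continuous_at by blast
  show ?thesis unfolding lim_set_iff
  proof (intro allI impI)
    fix K and e :: real assume e: "e > 0"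
    obtain d where d: "d > 0" "\<forall>w. dist w z < d \<longrightarrow> dist (f w) (f z) < e"
      using cz e unfolding continuous_at_eps_delta by blast
    obtain m where m: "m > K + 2" "dist (s m) z < d" using z d unfolding lim_set_iff by blast
    have "m > 0" using m by simp
    then obtain n where n: "a n = m" using ab(2) by blast
    have "b n > K" using ab(3)[rule_format, of n] n m by linarith
    moreover have "f (s m) = s (b n)" using ab(1) n by metis
    ultimately show "\<exists>n>K. dist (s n) (f z) < e" using d m by metis
  qed
qed

lemma lim_set_preimage:
  assumes U: "open U" "continuous_on U f" and C: "compact C" "C \<subseteq> U" "range s \<subseteq> C"
    and ab: "\<forall>n. f (s (a n)) = s (b n)" "\<forall>m>0. \<exists>n. b n = m" "\<forall>n. b n \<le> a n + 1"
    and z: "z \<in> lim_set s"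
  shows "\<exists>w\<in>lim_set s. f w = z"
proof -
  have "\<forall>k. \<exists>m. m > k + 1 \<and> dist (s m) z < inverse (real (Suc k))"
    using z unfolding lim_set_iff by auto
  then obtain m where m: "\<And>k. m k > k + 1" "\<And>k. dist (s (m k)) z < inverse (real (Suc k))"
    by metis
  have "\<forall>k. \<exists>n. b n = m k"
  proof
    fix k have "m k > 0" using m(1)[of k] by simp
    then show "\<exists>n. b n = m k" using ab(2) by blast
  qed
  then obtain n where n: "\<And>k. b (n k) = m k" by metis
  have an: "a (n k) > k" for k using ab(3)[rule_format, of "n k"] n[of k] m(1)[of k] by linarith
  define t where "t k = s (a (n k))" for k
  have "\<forall>k. t k \<in> C" using C(3) unfolding t_def by auto
  then obtain w r where w: "w \<in> C" "strict_mono r" "(t \<circ> r) \<longlonglongrightarrow> w"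
    using seq_compactE[OF compact_imp_seq_compact[OF C(1)], of t] by blast
  have wL: "w \<in> lim_set s" unfolding lim_set_iff
  proof (intro allI impI)
    fix K and e :: real assume e: "e > 0"
    obtain N where N: "\<forall>k\<ge>N. dist ((t \<circ> r) k) w < e"
      using w(3) e unfolding lim_sequentially by blast
    define k where "k = max N K"
    have "r k \<ge> k" using seq_suble[OF w(2)] by blast
    moreover have "k \<ge> N" "k \<ge> K" unfolding k_def by auto
    ultimately have "a (n (r k)) > K" using an[of "r k"] by linarith
    then show "\<exists>n>K. dist (s n) w < e" using N \<open>k \<ge> N\<close> unfolding t_def
      by (intro exI[of _ "a (n (r k))"]) auto
  qed
  have "isCont f w" using U continuous_on_eq_continuous_at w(1) C(2) by blast
  then have L1: "(\<lambda>k. f ((t \<circ> r) k)) \<longlonglongrightarrow> f w"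
    by (rule isCont_tendsto_compose[OF _ w(3)])
  have ev: "\<forall>\<^sub>F k in sequentially. norm (dist (s (m k)) z) \<le> inverse (real (Suc k))"
    by (rule always_eventually, rule allI) (metis m(2) less_imp_le real_norm_def abs_of_nonneg zero_le_dist)
  have "(\<lambda>k. dist (s (m k)) z) \<longlonglongrightarrow> 0"
    by (rule Lim_null_comparison[OF ev LIMSEQ_inverse_real_of_nat])
  then have "(\<lambda>k. s (m k)) \<longlonglongrightarrow> z" using tendsto_dist_iff by blast
  then have "((\<lambda>k. s (m k)) \<circ> r) \<longlonglongrightarrow> z" using LIMSEQ_subseq_LIMSEQ w(2) by blast
  moreover have eq: "(\<lambda>k. f ((t \<circ> r) k)) = ((\<lambda>k. s (m k)) \<circ> r)"
  proof (rule ext)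
    fix k show "f ((t \<circ> r) k) = ((\<lambda>k. s (m k)) \<circ> r) k"
      using ab(1)[rule_format, of "n (r k)"] n[of "r k"] by (simp add: t_def)
  qed
  ultimately have "(\<lambda>k. f ((t \<circ> r) k)) \<longlonglongrightarrow> z" by (simp only: eq)
  then have "f w = z" by (rule LIMSEQ_unique[OF L1])
  then show ?thesis using wL by blast
qed

lemma sol_iter: "is_solution U f \<sigma> x \<Longrightarrow> \<sigma> (i + int j) = (f^^j) (\<sigma> i)"
proof (induction j)
  case 0 then show ?case by simp
next
  case (Suc j)
  have "\<sigma> (i + int (Suc j)) = \<sigma> ((i + int j) + 1)" by (simp add: ac_simps)
  also have "\<dots> = f (\<sigma> (i + int j))" using Suc.prems unfolding is_solution_def by metis
  finally show ?case using Suc by simp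
qed

lemma sol_shift: "is_solution U f \<sigma> x \<Longrightarrow> is_solution U f (\<lambda>j. \<sigma> (j + k)) (\<sigma> k)"
  unfolding is_solution_def
proof (intro conjI allI)
  fix n assume H: "\<sigma> 0 = x \<and> (\<forall>n. \<sigma> n \<in> U \<and> f (\<sigma> n) = \<sigma> (n + 1))"
  show "\<sigma> (n + k) \<in> U" using H by blast
  have "f (\<sigma> (n + k)) = \<sigma> (n + k + 1)" using H by blast
  then show "f (\<sigma> (n + k)) = \<sigma> (n + 1 + k)" by (simp add: ac_simps)
qed simp

lemma inv_shift: "is_solution U f \<sigma> x \<Longrightarrow> range \<sigma> \<subseteq> D \<Longrightarrow> \<sigma> k \<in> Inv U f D"
  unfolding Inv_def using sol_shift[of U f \<sigma> x k] by blast

lemma inv_mono: "D \<subseteq> E \<Longrightarrow> Inv U f D \<subseteq> Inv U f E"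
  unfolding Inv_def by blast

lemma inv_sub: "Inv U f D \<subseteq> D" unfolding Inv_def by blast

lemma inv_U: "Inv U f D \<subseteq> U" unfolding Inv_def is_solution_def by blast

lemma inv_range: "z \<in> Inv U f D \<Longrightarrow> \<exists>\<sigma>. is_solution U f \<sigma> z \<and> range \<sigma> \<subseteq> Inv U f D"
proof -
  assume "z \<in> Inv U f D"
  then obtain \<sigma> where s: "is_solution U f \<sigma> z" "range \<sigma> \<subseteq> D" unfolding Inv_def by blast
  then have "range \<sigma> \<subseteq> Inv U f D" using inv_shift[OF s] by auto
  then show ?thesis using s by blast
qed

lemma inv_iter: "z \<in> Inv U f D \<Longrightarrow> (f^^n) z \<in> Inv U f D"
proof -
  assume "z \<in> Inv U f D"
  then obtain \<sigma> where s: "is_solution U f \<sigma> z" "range \<sigma> \<subseteq> D" unfolding Inv_def by blast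
  have z0: "\<sigma> 0 = z" using s(1) unfolding is_solution_def by blast
  have "(f^^n) z = \<sigma> (0 + int n)" using sol_iter[OF s(1), of 0 n] unfolding z0 by (rule sym)
  then show ?thesis using inv_shift[OF s] by simp
qed

lemma invariant_sol:
  assumes "L \<subseteq> U" "\<And>z. z \<in> L \<Longrightarrow> f z \<in> L" "\<And>z. z \<in> L \<Longrightarrow> \<exists>w\<in>L. f w = z" "z \<in> L"
  shows "\<exists>\<sigma>. is_solution U f \<sigma> z \<and> range \<sigma> \<subseteq> L"
proof -
  obtain g where g: "\<And>y. y \<in> L \<Longrightarrow> g y \<in> L \<and> f (g y) = y" using assms(3) by metis
  define \<sigma> where "\<sigma> k = (if k \<ge> 0 then (f^^nat k) z else (g^^nat (-k)) z)" for k
  have fin: "(f^^n) z \<in> L" for n by (induction n) (use assms(2,4) in auto)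
  have gin: "(g^^n) z \<in> L" for n by (induction n) (use g assms(4) in auto)
  have rng: "range \<sigma> \<subseteq> L" unfolding \<sigma>_def using fin gin by auto
  have step: "f (\<sigma> n) = \<sigma> (n + 1)" for n
  proof (cases "n \<ge> 0")
    case True
    then have "nat (n + 1) = Suc (nat n)" by simp
    then show ?thesis unfolding \<sigma>_def using True by simp
  next
    case False
    have e1: "\<sigma> (n + 1) = (g^^(nat (-(n+1)))) z"
    proof (cases "n = -1")
      case True then show ?thesis unfolding \<sigma>_def by simp
    next
      case False2: False
      then show ?thesis using False unfolding \<sigma>_def by simp
    qed
    have "nat (-n) = Suc (nat (-(n+1)))" using False by simp
    then have "\<sigma> n = g ((g^^(nat (-(n+1)))) z)" unfolding \<sigma>_def using False by simp
    then show ?thesis using e1 g gin by simp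
  qed
  have "is_solution U f \<sigma> z" unfolding is_solution_def
    using step rng assms(1) by (auto simp: \<sigma>_def)
  then show ?thesis using rng by blast
qed

lemma lim_set_inv:
  assumes U: "open U" "continuous_on U f" and C: "compact C" "C \<subseteq> U" "range s \<subseteq> C"
    and dir: "(\<forall>n. f (s n) = s (Suc n)) \<or> (\<forall>n. f (s (Suc n)) = s n)"
  shows "lim_set s \<noteq> {}" and "closed D \<Longrightarrow> range s \<subseteq> D \<Longrightarrow> lim_set s \<subseteq> Inv U f D"
proof -
  show "lim_set s \<noteq> {}" using lim_set_nonempty C by blast
  have LC: "lim_set s \<subseteq> C" using lim_set_closed_subset C compact_imp_closed by blast
  have cl: "f z \<in> lim_set s \<and> (\<exists>w\<in>lim_set s. f w = z)" if z: "z \<in> lim_set s" for z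
    using dir
  proof
    assume fw: "\<forall>n. f (s n) = s (Suc n)"
    have 1: "f z \<in> lim_set s"
      by (rule lim_set_image[where a="\<lambda>n. n" and b=Suc, OF U C _ _ _ z]) (use fw in auto)
    have 2: "\<exists>w\<in>lim_set s. f w = z"
    proof (rule lim_set_preimage[where a="\<lambda>n. n" and b=Suc, OF U C _ _ _ z])
      show "\<forall>m>0. \<exists>n. Suc n = m" by (metis gr0_conv_Suc)
    qed (use fw in auto)
    show ?thesis using 1 2 by blast
  next
    assume bw: "\<forall>n. f (s (Suc n)) = s n"
    have 1: "f z \<in> lim_set s"
    proof (rule lim_set_image[where a=Suc and b="\<lambda>n. n", OF U C _ _ _ z])
      show "\<forall>m>0. \<exists>n. Suc n = m" by (metis gr0_conv_Suc)
    qed (use bw in auto)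
    have 2: "\<exists>w\<in>lim_set s. f w = z"
      by (rule lim_set_preimage[where a=Suc and b="\<lambda>n. n", OF U C _ _ _ z]) (use bw in auto)
    show ?thesis using 1 2 by blast
  qed
  assume D: "closed D" "range s \<subseteq> D"
  have LD: "lim_set s \<subseteq> D" using lim_set_closed_subset D by blast
  show "lim_set s \<subseteq> Inv U f D"
  proof
    fix z assume z: "z \<in> lim_set s"
    obtain \<sigma> where "is_solution U f \<sigma> z" "range \<sigma> \<subseteq> lim_set s"
      using invariant_sol[of "lim_set s" U f z] LC C(2) cl z by blast
    then show "z \<in> Inv U f D" unfolding Inv_def using LD z by blast
  qed
qed



lemma omega_iter: "omega_limit f ((f^^j) y) = omega_limit f y"
proof -
  have "(\<lambda>n. (f^^n) ((f^^j) y)) = (\<lambda>n. (f^^(n + j)) y)" by (simp add: funpow_add)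
  then show ?thesis unfolding omega_eq using lim_set_shift[of "\<lambda>n. (f^^n) y" j] by simp
qed

lemma omega_sol: "is_solution U f \<sigma> x \<Longrightarrow> omega_limit f (\<sigma> k) = omega_limit f (\<sigma> 0)"
proof (cases "k \<ge> 0")
  case True
  assume s: "is_solution U f \<sigma> x"
  have "\<sigma> k = (f^^nat k) (\<sigma> 0)" using sol_iter[OF s, of 0 "nat k"] True by simp
  then show ?thesis using omega_iter by metis
next
  case False
  assume s: "is_solution U f \<sigma> x"
  have "\<sigma> 0 = (f^^nat (-k)) (\<sigma> k)" using sol_iter[OF s, of k "nat (-k)"] False by simp
  then show ?thesis using omega_iter by metis
qed

lemma alpha_shift: "alpha_limit (\<lambda>j. \<sigma> (j + k)) = alpha_limit \<sigma>"
proof (cases "k \<ge> 0")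
  case True
  define s' where "s' n = \<sigma> (- int n + k)" for n
  have eq: "(\<lambda>n. s' (n + nat k)) = (\<lambda>n. \<sigma> (- int n))" unfolding s'_def using True by (auto simp: fun_eq_iff)
  have "alpha_limit (\<lambda>j. \<sigma> (j + k)) = lim_set s'" unfolding alpha_eq s'_def by (rule refl)
  also have "\<dots> = lim_set (\<lambda>n. s' (n + nat k))" by (rule lim_set_shift[symmetric])
  also have "\<dots> = lim_set (\<lambda>n. \<sigma> (- int n))" by (simp only: eq)
  finally show ?thesis unfolding alpha_eq .
next
  case False
  have eq: "(\<lambda>n. \<sigma> (- int n + k)) = (\<lambda>n. \<sigma> (- int (n + nat (-k))))" using False by (auto simp: fun_eq_iff)
  have "alpha_limit (\<lambda>j. \<sigma> (j + k)) = lim_set (\<lambda>n. \<sigma> (- int n + k))" unfolding alpha_eq by (rule refl)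
  also have "\<dots> = lim_set (\<lambda>n. \<sigma> (- int (n + nat (-k))))" by (simp only: eq)
  also have "\<dots> = lim_set (\<lambda>n. \<sigma> (- int n))" by (rule lim_set_shift)
  finally show ?thesis unfolding alpha_eq .
qed

theorem mainTheorem15:
  fixes U :: "'a::metric_space set" and f :: "'a \<Rightarrow> 'a" and S :: "'a set"
    and P :: "'p set" and lt :: "'p \<Rightarrow> 'p \<Rightarrow> bool" and M :: "'p \<Rightarrow> 'a set"
    and N :: "'p set \<Rightarrow> 'a set" and I J :: "'p set"
  assumes "locally compact (UNIV :: 'a set)"
    and "open U" and "continuous_on U f"
    and "isolated_invariant U f S"
    and "morse_decomposition U f S P lt M"
    and "morse_set_filtration U f S P lt M N"
    and "attracting_interval P lt I" and "attracting_interval P lt J" and "J \<subseteq> I"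
  shows "filtration_pair U f (morse_set U f S M (I - J)) (N I) (N J)"
proof -
  note Uo = assms(2) and fc = assms(3) and md = assms(5) and mf = assms(6)
    and aI = assms(7) and aJ = assms(8) and JI = assms(9)
  note md' = md[unfolded morse_decomposition_def]
  have md1: "\<And>p. p \<in> P \<Longrightarrow> M p \<subseteq> S \<and> isolated_invariant U f (M p)"
    using md'[THEN conjunct2, THEN conjunct1] by blast
  have md2: "\<And>p q. p \<in> P \<Longrightarrow> q \<in> P \<Longrightarrow> p \<noteq> q \<Longrightarrow> M p \<inter> M q = {}"
    using md'[THEN conjunct2, THEN conjunct2, THEN conjunct1] by blast
  have md3: "\<And>x \<sigma>. x \<in> S \<Longrightarrow> is_solution U f \<sigma> x \<Longrightarrow> range \<sigma> \<subseteq> S \<Longrightarrow>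
        (\<exists>p\<in>P. range \<sigma> \<subseteq> M p) \<or>
        (\<exists>p\<in>P. \<exists>q\<in>P. lt p q \<and> omega_limit f (\<sigma> 0) \<subseteq> M p \<and> alpha_limit \<sigma> \<subseteq> M q)"
    using md'[THEN conjunct2, THEN conjunct2, THEN conjunct2] by blast
  have isoM: "\<exists>Np. isolating_nbhd U f Np \<and> M p = Inv U f Np" if "p \<in> P" for p
    using md1[OF that] unfolding isolated_invariant_def by blast
  have a0: "attracting_interval P lt {}" by (simp add: attracting_interval_def)
  have IP: "I \<subseteq> P" and JP: "J \<subseteq> P" using aI aJ unfolding attracting_interval_def by auto
  have mfall: "compact (N I') \<and> filtration_pair U f (morse_set U f S M I') (N I') (N {}) \<and>
        N I' \<inter> N J' = N (I' \<inter> J') \<and> N I' \<union> N J' = N (I' \<union> J')"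
    if "attracting_interval P lt I'" "attracting_interval P lt J'" for I' J'
    using mf[unfolded morse_set_filtration_def, rule_format, OF that] .
  have mfIJ: "N I \<inter> N J = N (I \<inter> J)" using mfall[OF aI aJ] by blast
  have mfJ0: "N J \<inter> N {} = N (J \<inter> {})" using mfall[OF aJ a0] by blast
  have "I \<inter> J = J" using JI by blast
  then have "N I \<inter> N J = N J" using mfIJ by simp
  then have NJI: "N J \<subseteq> N I" by blast
  have "N J \<inter> N {} = N {}" using mfJ0 by simp
  then have N0J: "N {} \<subseteq> N J" by blast
  define A where "A = morse_set U f S M I"
  define B where "B = morse_set U f S M J"
  define A0 where "A0 = closure (N I - N {})"
  define B0 where "B0 = closure (N J - N {})"
  define K where "K = closure (N I - N J)"
  have FI: "filtration_pair U f A (N I) (N {})" using mfall[OF aI aI] unfolding A_def by blast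
  have FJ: "filtration_pair U f B (N J) (N {})" using mfall[OF aJ aJ] unfolding B_def by blast
  have cNI: "compact (N I)" and NIU': "N I \<subseteq> interior U" and ciNI: "closure (interior (N I)) = N I"
    and isoI: "isolating_nbhd U f A0" and AI: "Inv U f A0 = A"
    and exI: "\<exists>V. open V \<and> exit_set f (N I) \<subseteq> V \<and> V \<inter> N I \<subseteq> N {}"
    and fI: "f ` N {} \<inter> A0 = {}"
    using FI unfolding filtration_pair_def A0_def by blast+
  have cNJ: "compact (N J)" and ciNJ: "closure (interior (N J)) = N J"
    and BJ: "Inv U f B0 = B"
    and exJ: "\<exists>V. open V \<and> exit_set f (N J) \<subseteq> V \<and> V \<inter> N J \<subseteq> N {}"
    using FJ unfolding filtration_pair_def B0_def by blast+
  have clNI: "closed (N I)" using cNI compact_imp_closed by blast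
  have clNJ: "closed (N J)" using cNJ compact_imp_closed by blast
  have A0NI: "A0 \<subseteq> N I" unfolding A0_def using clNI closure_minimal by blast
  have B0NJ: "B0 \<subseteq> N J" unfolding B0_def using clNJ closure_minimal by blast
  have KNI: "K \<subseteq> N I" unfolding K_def using clNI closure_minimal by blast
  have KA0: "K \<subseteq> A0" unfolding K_def A0_def using N0J by (intro closure_mono) blast
  have NIU: "N I \<subseteq> U" using NIU' interior_subset[of U] by (rule order_trans)
  have AA0: "A \<subseteq> A0" using AI inv_sub[of U f A0] by simp
  have BNJ: "B \<subseteq> N J" using BJ inv_sub[of U f B0] B0NJ by simp
  have cK: "compact K"
  proof -
    have "N I \<inter> K = K" using KNI by blast
    then show ?thesis using compact_Int_closed[OF cNI, of K] unfolding K_def by simp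
  qed
  have cB0: "compact B0"
  proof -
    have "N J \<inter> B0 = B0" using B0NJ by blast
    then show ?thesis using compact_Int_closed[OF cNJ, of B0] unfolding B0_def by simp
  qed
  have E1: "f x \<in> interior (N J)" if "x \<in> N J" "x \<notin> N {}" for x
  proof (rule ccontr)
    assume "f x \<notin> interior (N J)"
    then have "x \<in> exit_set f (N J)" using that unfolding exit_set_def by blast
    then show False using exJ that by blast
  qed
  have E2: "f x \<notin> A0" if "x \<in> N {}" for x using fI that by blast
  have E3: "interior (N J) \<inter> K = {}" unfolding K_def
    using open_Int_closure_eq_empty[OF open_interior, of "N J" "N I - N J"] interior_subset by blast
  have fNJK: "f x \<notin> K" if "x \<in> N J" for x
  proof (cases "x \<in> N {}")
    case True then show ?thesis using E2 KA0 by blast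
  next
    case False then show ?thesis using E1 E3 that by blast
  qed
  have Anot0: "w \<notin> N {}" if "w \<in> A" for w
  proof -
    have "(f^^1) w \<in> A" using inv_iter[of w U f A0 1] that AI by simp
    then show ?thesis using E2 AA0 by auto
  qed
  have E4: "(f^^n) y \<in> N J - N {}" if "y \<in> A" "y \<in> N J" for y n
  proof (induction n)
    case 0 then show ?case using that Anot0 by simp
  next
    case (Suc n)
    have "(f^^Suc n) y \<in> A" using inv_iter[of y U f A0 "Suc n"] that AI by simp
    moreover have "(f^^Suc n) y \<in> N J" using E1[of "(f^^n) y"] Suc interior_subset by auto
    ultimately show ?case using Anot0 by blast
  qed
  have E5: "omega_limit f y \<noteq> {} \<and> omega_limit f y \<subseteq> B" if "y \<in> A" "y \<in> N J" for y
  proof -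
    have r: "range (\<lambda>n. (f^^n) y) \<subseteq> B0" using E4[OF that] closure_subset unfolding B0_def by blast
    have CU: "B0 \<subseteq> U" using B0NJ NJI NIU by blast
    have d: "(\<forall>n. f ((f^^n) y) = (f^^Suc n) y) \<or> (\<forall>n. f ((\<lambda>n. (f^^n) y) (Suc n)) = (f^^n) y)" by simp
    have 1: "lim_set (\<lambda>n. (f^^n) y) \<noteq> {}" by (rule lim_set_inv(1)[OF Uo fc cB0 CU r d])
    have 2: "lim_set (\<lambda>n. (f^^n) y) \<subseteq> Inv U f B0"
      by (rule lim_set_inv(2)[OF Uo fc cB0 CU r d _ r]) (simp add: B0_def)
    show ?thesis unfolding omega_eq using 1 2[unfolded BJ] by (rule conjI)
  qed
  have E6: "omega_limit f z \<noteq> {} \<and> omega_limit f z \<subseteq> M p" if "p \<in> P" "z \<in> M p" for p z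
  proof -
    obtain Np where Np: "isolating_nbhd U f Np" "M p = Inv U f Np"
      using isoM[of p] \<open>p \<in> P\<close> by blast
    have cNp: "compact Np" "Np \<subseteq> U" using Np(1) unfolding isolating_nbhd_def by auto
    have "(f^^n) z \<in> Inv U f Np" for n using inv_iter[of z U f Np] that Np(2) by simp
    then have r: "range (\<lambda>n. (f^^n) z) \<subseteq> Np" using inv_sub[of U f Np] by blast
    have d: "(\<forall>n. f ((f^^n) z) = (f^^Suc n) z) \<or> (\<forall>n. f ((\<lambda>n. (f^^n) z) (Suc n)) = (f^^n) z)" by simp
    have 1: "lim_set (\<lambda>n. (f^^n) z) \<noteq> {}" by (rule lim_set_inv(1)[OF Uo fc cNp r d])
    have 2: "lim_set (\<lambda>n. (f^^n) z) \<subseteq> Inv U f Np"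
      by (rule lim_set_inv(2)[OF Uo fc cNp r d compact_imp_closed[OF cNp(1)] r])
    show ?thesis unfolding omega_eq using 1 2[folded Np(2)] by (rule conjI)
  qed
  have disj: "M a \<inter> M b = {}" if "a \<in> P" "b \<in> P" "a \<noteq> b" for a b
    using md2 that by blast
  have S1: "a \<in> L" if "L \<subseteq> P" "a \<in> P" "z \<in> M a" "z \<in> morse_set U f S M L" for L a z
  proof -
    from that(4) consider (m) p where "p \<in> L" "z \<in> M p"
      | (c) q r where "q \<in> L" "r \<in> L" "z \<in> connecting U f (M q) (M r) S"
      unfolding morse_set_def by blast
    then show ?thesis
    proof cases
      case m then show ?thesis using disj[of a p] that by blast
    next
      case c
      have "z \<notin> M r" "omega_limit f z \<subseteq> M r" using c(3) unfolding connecting_def by auto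
      moreover have "omega_limit f z \<noteq> {} \<and> omega_limit f z \<subseteq> M a" using E6 that by blast
      ultimately show ?thesis using disj[of a r] c that by blast
    qed
  qed
  have MS: "morse_set U f S M L \<subseteq> S" if "L \<subseteq> P" for L
    using md1 that unfolding morse_set_def connecting_def by blast
  have Mp_sub: "M p \<subseteq> morse_set U f S M L" if "p \<in> L" for p L
    using that unfolding morse_set_def by blast
  have H: "y \<notin> N J" if yA: "y \<in> A" and om: "omega_limit f y \<subseteq> M r" and rP: "r \<in> P" and rJ: "r \<notin> J" for y r
  proof
    assume yJ: "y \<in> N J"
    then obtain z where z: "z \<in> omega_limit f y" "z \<in> B" using E5[OF yA yJ] by blast
    then have "r \<in> J" using S1[of J r z] JP rP om unfolding B_def by blast
    then show False using rJ by blast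
  qed
  have AK: "A - N J \<subseteq> K" using AA0 A0NI closure_subset unfolding K_def by blast
  have InvK_sub: "Inv U f K \<subseteq> A - N J"
  proof
    fix x assume x: "x \<in> Inv U f K"
    then obtain \<sigma> where s: "is_solution U f \<sigma> x" "range \<sigma> \<subseteq> K" unfolding Inv_def by blast
    have "x \<in> A" using inv_mono[OF KA0, of U f] x AI by blast
    moreover have "x \<notin> N J"
    proof
      assume "x \<in> N J"
      moreover have "f x = \<sigma> 1" using s(1) unfolding is_solution_def by (metis add_0)
      ultimately show False using fNJK s(2) by auto
    qed
    ultimately show "x \<in> A - N J" by blast
  qed
  have AS: "A \<subseteq> S" using MS IP unfolding A_def by blast
  have KU: "K \<subseteq> U" using KNI NIU by blast
  have clK: "closed K" unfolding K_def by simp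
  have main: "Inv U f K = morse_set U f S M (I - J)"
  proof
    show "Inv U f K \<subseteq> morse_set U f S M (I - J)"
    proof
      fix x assume x: "x \<in> Inv U f K"
      then obtain \<sigma> where s: "is_solution U f \<sigma> x" "range \<sigma> \<subseteq> K" unfolding Inv_def by blast
      have s0: "\<sigma> 0 = x" using s(1) unfolding is_solution_def by blast
      have rs: "range \<sigma> \<subseteq> A - N J" using inv_shift[OF s] InvK_sub by blast
      have xA: "x \<in> A - N J" using InvK_sub x by blast
      have xS: "x \<in> S" using xA AS by blast
      have rS: "range \<sigma> \<subseteq> S" using rs AS by blast
      have pIJ: "p \<in> I - J" if "p \<in> P" "z \<in> M p" "z \<in> A - N J" for p z
      proof -
        have "p \<in> I" using S1[of I p z] IP that unfolding A_def by blast
        moreover have "p \<notin> J" using Mp_sub[of p J] BNJ that unfolding B_def by blast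
        ultimately show ?thesis by blast
      qed
      from md3[OF xS s(1) rS]
      consider (a) p where "p \<in> P" "range \<sigma> \<subseteq> M p"
        | (b) p q where "p \<in> P" "q \<in> P" "omega_limit f (\<sigma> 0) \<subseteq> M p" "alpha_limit \<sigma> \<subseteq> M q"
        by blast
      then show "x \<in> morse_set U f S M (I - J)"
      proof cases
        case a
        then have "x \<in> M p" using s0 by blast
        then show ?thesis using pIJ[of p x] a xA Mp_sub[of p "I - J"] by blast
      next
        case b
        have d1: "(\<forall>n. f ((\<lambda>n. \<sigma> (int n)) n) = \<sigma> (int (Suc n))) \<or> (\<forall>n. f ((\<lambda>n. \<sigma> (int n)) (Suc n)) = \<sigma> (int n))"
        proof (rule disjI1, rule allI)
          fix n
          have "f (\<sigma> (int n)) = \<sigma> (int n + 1)" using s(1) unfolding is_solution_def by blast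
          then show "f ((\<lambda>n. \<sigma> (int n)) n) = \<sigma> (int (Suc n))" by (simp add: add.commute)
        qed
        have r1: "range (\<lambda>n. \<sigma> (int n)) \<subseteq> K" using s(2) by blast
        have om: "omega_limit f x = lim_set (\<lambda>n. \<sigma> (int n))"
          unfolding omega_eq using sol_iter[OF s(1), of 0] s0 by simp
        have "lim_set (\<lambda>n. \<sigma> (int n)) \<noteq> {}" by (rule lim_set_inv(1)[OF Uo fc cK KU r1 d1])
        moreover have "lim_set (\<lambda>n. \<sigma> (int n)) \<subseteq> Inv U f K" by (rule lim_set_inv(2)[OF Uo fc cK KU r1 d1 clK r1])
        ultimately obtain z1 where z1: "z1 \<in> omega_limit f x" "z1 \<in> Inv U f K"
          unfolding om by blast
        have d2: "(\<forall>n. f ((\<lambda>n. \<sigma> (- int n)) n) = \<sigma> (- int (Suc n))) \<or> (\<forall>n. f (\<sigma> (- int (Suc n))) = \<sigma> (- int n))"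
        proof (rule disjI2, rule allI)
          fix n
          have "f (\<sigma> (- int (Suc n))) = \<sigma> (- int (Suc n) + 1)" using s(1) unfolding is_solution_def by blast
          then show "f (\<sigma> (- int (Suc n))) = \<sigma> (- int n)" by simp
        qed
        have r2: "range (\<lambda>n. \<sigma> (- int n)) \<subseteq> K" using s(2) by blast
        have "lim_set (\<lambda>n. \<sigma> (- int n)) \<noteq> {}" by (rule lim_set_inv(1)[OF Uo fc cK KU r2 d2])
        moreover have "lim_set (\<lambda>n. \<sigma> (- int n)) \<subseteq> Inv U f K" by (rule lim_set_inv(2)[OF Uo fc cK KU r2 d2 clK r2])
        ultimately obtain z2 where z2: "z2 \<in> alpha_limit \<sigma>" "z2 \<in> Inv U f K"
          unfolding alpha_eq by blast
        have pI: "p \<in> I - J" using pIJ[of p z1] z1 b s0 InvK_sub by blast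
        have qI: "q \<in> I - J" using pIJ[of q z2] z2 b InvK_sub by blast
        show ?thesis
        proof (cases "x \<in> M p \<or> x \<in> M q")
          case True then show ?thesis using pI qI Mp_sub[of _ "I - J"] by blast
        next
          case False
          then have "x \<in> connecting U f (M q) (M p) S"
            unfolding connecting_def using xS s(1) rS b s0 by blast
          then show ?thesis unfolding morse_set_def using pI qI by blast
        qed
      qed
    qed
  next
    show "morse_set U f S M (I - J) \<subseteq> Inv U f K"
    proof
      fix x assume "x \<in> morse_set U f S M (I - J)"
      then consider (m) p where "p \<in> I - J" "x \<in> M p"
        | (c) q r where "q \<in> I - J" "r \<in> I - J" "x \<in> connecting U f (M q) (M r) S"
        unfolding morse_set_def by blast
      then show "x \<in> Inv U f K"
      proof cases
        case m
        have pP: "p \<in> P" using m IP by blast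
        obtain Np where Np: "isolating_nbhd U f Np" "M p = Inv U f Np"
          using isoM[OF pP] by blast
        obtain \<rho> where rho: "is_solution U f \<rho> x" "range \<rho> \<subseteq> M p" using inv_range[of x U f Np] m Np(2) by blast
        have "\<rho> k \<in> K" for k
        proof -
          have k1: "\<rho> k \<in> M p" using rho by blast
          then have "\<rho> k \<in> A" using Mp_sub[of p I] m unfolding A_def by blast
          moreover have "\<rho> k \<notin> N J" using H[of "\<rho> k" p] E6[OF pP k1] m pP \<open>\<rho> k \<in> A\<close> by blast
          ultimately show ?thesis using AK by blast
        qed
        then have rk: "range \<rho> \<subseteq> K" by blast
        have "\<rho> 0 = x" using rho(1) unfolding is_solution_def by blast
        then have "x \<in> K" using rk by blast
        then show ?thesis unfolding Inv_def using rho(1) rk by blast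
      next
        case c
        obtain \<sigma> where s: "is_solution U f \<sigma> x" "range \<sigma> \<subseteq> S" "alpha_limit \<sigma> \<subseteq> M q"
          "omega_limit f x \<subseteq> M r" "x \<in> S"
          using c(3) unfolding connecting_def by blast
        have s0: "\<sigma> 0 = x" using s(1) unfolding is_solution_def by blast
        have "\<sigma> k \<in> K" for k
        proof -
          have om: "omega_limit f (\<sigma> k) \<subseteq> M r" using omega_sol[OF s(1), of k] s0 s(4) by simp
          have "\<sigma> k \<in> A"
          proof (cases "\<sigma> k \<in> M q \<or> \<sigma> k \<in> M r")
            case True then show ?thesis using Mp_sub[of _ I] c unfolding A_def by blast
          next
            case False
            have "is_solution U f (\<lambda>j. \<sigma> (j + k)) (\<sigma> k)" using sol_shift[OF s(1)] by blast
            moreover have "range (\<lambda>j. \<sigma> (j + k)) \<subseteq> S" using s(2) by blast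
            moreover have "alpha_limit (\<lambda>j. \<sigma> (j + k)) \<subseteq> M q" using alpha_shift s(3) by metis
            moreover have "\<sigma> k \<in> S" using s(2) by blast
            ultimately have "\<sigma> k \<in> connecting U f (M q) (M r) S"
              unfolding connecting_def using False om by blast
            then show ?thesis unfolding A_def morse_set_def using c by blast
          qed
          moreover have "\<sigma> k \<notin> N J" using H[of "\<sigma> k" r] om c IP \<open>\<sigma> k \<in> A\<close> by blast
          ultimately show ?thesis using AK by blast
        qed
        then have rk: "range \<sigma> \<subseteq> K" by blast
        then have "x \<in> K" using s0 by blast
        then show ?thesis unfolding Inv_def using s(1) rk by blast
      qed
    qed
  qed
  have isoK: "isolating_nbhd U f K"
  proof -
    have "A \<subseteq> interior A0" using isoI AI unfolding isolating_nbhd_def by blast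
    then have "Inv U f K \<subseteq> interior A0 - N J" using InvK_sub by blast
    moreover have "interior A0 - N J \<subseteq> interior K"
    proof (rule interior_maximal)
      have "interior A0 - N J \<subseteq> N I - N J" using interior_subset[of A0] A0NI by blast
      then show "interior A0 - N J \<subseteq> K" using closure_subset[of "N I - N J"] unfolding K_def by blast
      show "open (interior A0 - N J)" using open_Diff[OF open_interior clNJ] .
    qed
    ultimately show ?thesis unfolding isolating_nbhd_def using cK KU by blast
  qed
  have exK: "\<exists>V. open V \<and> exit_set f (N I) \<subseteq> V \<and> V \<inter> N I \<subseteq> N J"
    using exI N0J by blast
  have fK: "f ` N J \<inter> K = {}" using fNJK by blast
  show ?thesis unfolding filtration_pair_def
    using cNI cNJ NJI NIU' ciNI ciNJ isoK main exK fK unfolding K_def by blast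
qed

end
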